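(* Let $X$ be an $N$-dimensional $C^1$-manifold with corners and $\sigma:\Delta_d\to X$ continuous and of class $C^1$ on all open faces. Suppose there exist a subdivision of $\Delta_d$ into subsimplices and, for each subsimplex, a chart $(U,\phi)$ of $X$ with the subsimplex mapped into $U$, such that each composite $\phi\circ\sigma|_{\text{subsimplex}}$ has finite volume. Then for every subdivision of $\Delta_d$ into subsimplices each mapped by $\sigma$ into the domain of some chart, and every such choice of charts, the corresponding composites have finite volume. (That is, the property of having finite volume is independent of the choice of subdivision and charts.)
   Context: For $V\subset\mathbb{R}^N_{\ge0}$ open, a function $V\to\mathbb{R}$ is $C^p$ if it extends to a $C^p$ function on an open neighbourhood of $V$ in $\mathbb{R}^N$. A $C^p$-manifold with corners is a second countable Hausdorff space $X$ with an atlas of charts $\phi:U\to V$ (homeomorphisms from open $U\subset X$ onto open $V\subset\mathbb{R}^N_{\ge0}$) whose transition maps are $C^p$ in this sense. $\Delta_d=\{(a_1,\dots,a_d)\mid a_i\ge0,\sum a_i\le1\}$; open faces are interiors of faces of any dimension. A map $\tau$ from a (sub)simplex of dimension $d$ to $\mathbb{R}^N$, continuous and $C^1$ on open faces, has finite volume if $\int\tau^*(\omega)$ converges absolutely for every continuous $d$-form $\omega$ on its image. *)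

theory Defs
  imports "HOL-Analysis.Analysis"
begin

definition C1_on_open :: "('m::euclidean_space) set \<Rightarrow> ('m \<Rightarrow> 'k::euclidean_space) \<Rightarrow> bool" where
  "C1_on_open W g \<longleftrightarrow> open W \<and>
     (\<exists>g'. (\<forall>y\<in>W. (g has_derivative blinfun_apply (g' y)) (at y)) \<and> continuous_on W g')"

definition C1_ext :: "('m::euclidean_space) set \<Rightarrow> ('m \<Rightarrow> 'k::euclidean_space) \<Rightarrow> bool" where
  "C1_ext V f \<longleftrightarrow> (\<exists>W g. V \<subseteq> W \<and> C1_on_open W g \<and> (\<forall>y\<in>V. g y = f y))"

text \<open>f is C^1 near the point x of S (locally extends to a C^1 function); used for
  C^1-ness on open faces (relatively open subsets of affine subspaces).\<close>
definition C1_near :: "('m::euclidean_space) set \<Rightarrow> ('m \<Rightarrow> 'k::euclidean_space) \<Rightarrow> 'm \<Rightarrow> bool" where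
  "C1_near S f x \<longleftrightarrow> (\<exists>W g. x \<in> W \<and> C1_on_open W g \<and> (\<forall>y\<in>W \<inter> S. g y = f y))"

definition orthant :: "(real^'n) set" where
  "orthant = {x. \<forall>i. 0 \<le> x $ i}"

definition C1_manifold_with_corners ::
  "'a topology \<Rightarrow> ('a set \<times> ('a \<Rightarrow> real^'n::finite)) set \<Rightarrow> bool" where
  "C1_manifold_with_corners X A \<longleftrightarrow>
     Hausdorff_space X \<and> second_countable X \<and>
     (\<forall>(U, \<phi>)\<in>A. openin X U \<and> openin (top_of_set orthant) (\<phi> ` U) \<and>
        homeomorphic_map (subtopology X U) (top_of_set (\<phi> ` U)) \<phi>) \<and>
     (\<Union>(fst ` A) = topspace X) \<and>
     (\<forall>(U, \<phi>)\<in>A. \<forall>(U', \<psi>)\<in>A. C1_ext (\<phi> ` (U \<inter> U')) (\<psi> \<circ> inv_into U \<phi>))"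

definition std_simplex :: "(real^'d::finite) set" where
  "std_simplex = {a. (\<forall>i. 0 \<le> a $ i) \<and> (\<Sum>i\<in>UNIV. a $ i) \<le> 1}"

definition open_faces :: "('m::euclidean_space) set \<Rightarrow> 'm set set" where
  "open_faces S = {rel_interior F | F. F face_of S}"

definition subdivision :: "(real^'d::finite) set set \<Rightarrow> bool" where
  "subdivision \<T> \<longleftrightarrow> finite \<T> \<and> \<T> \<noteq> {} \<and>
     (\<forall>T\<in>\<T>. int CARD('d) simplex T) \<and>
     \<Union>\<T> = std_simplex \<and>
     (\<forall>T\<in>\<T>. \<forall>T'\<in>\<T>. (T \<inter> T') face_of T \<and> (T \<inter> T') face_of T')"

definition C1_on_open_faces ::
  "'a topology \<Rightarrow> ('a set \<times> ('a \<Rightarrow> real^'n::finite)) set \<Rightarrow> (real^'d::finite \<Rightarrow> 'a) \<Rightarrow> bool" where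
  "C1_on_open_faces X A \<sigma> \<longleftrightarrow>
     continuous_map (top_of_set std_simplex) X \<sigma> \<and>
     (\<forall>F\<in>open_faces std_simplex. \<forall>x\<in>F. \<forall>(U, \<phi>)\<in>A. \<sigma> x \<in> U \<longrightarrow>
        C1_near {y\<in>F. \<sigma> y \<in> U} (\<phi> \<circ> \<sigma>) x)"

definition continuous_form_on :: "(real^'n::finite) set \<Rightarrow> (real^'n \<Rightarrow> ('d \<Rightarrow> real^'n) \<Rightarrow> real) \<Rightarrow> bool" where
  "continuous_form_on S \<omega> \<longleftrightarrow>
     (\<forall>x\<in>S. (\<forall>v j. linear (\<lambda>w. \<omega> x (v(j := w)))) \<and>
             (\<forall>v i j. i \<noteq> j \<and> v i = v j \<longrightarrow> \<omega> x v = 0)) \<and>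
     (\<forall>v. continuous_on S (\<lambda>x. \<omega> x v))"

text \<open>The pullback tau^*(omega), as a density w.r.t. da_1 ... da_d.\<close>
definition pullback_density ::
  "(real^'d::finite \<Rightarrow> real^'n::finite) \<Rightarrow> (real^'n \<Rightarrow> ('d \<Rightarrow> real^'n) \<Rightarrow> real) \<Rightarrow> real^'d \<Rightarrow> real" where
  "pullback_density \<tau> \<omega> a = \<omega> (\<tau> a) (\<lambda>j. frechet_derivative \<tau> (at a) (axis j 1))"

definition finite_volume :: "(real^'d::finite) set \<Rightarrow> (real^'d \<Rightarrow> real^'n::finite) \<Rightarrow> bool" where
  "finite_volume T \<tau> \<longleftrightarrow>
     (\<forall>\<omega>. continuous_form_on (\<tau> ` T) \<omega> \<longrightarrow>
        pullback_density \<tau> \<omega> absolutely_integrable_on interior T)"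

end

theory Submission
  imports Defs
begin

definition alt_ml :: "(('d::finite \<Rightarrow> real^'n::finite) \<Rightarrow> real) \<Rightarrow> bool" where
  "alt_ml \<Phi> \<longleftrightarrow> (\<forall>v j. linear (\<lambda>w. \<Phi> (v(j := w)))) \<and> (\<forall>v i j. i \<noteq> j \<and> v i = v j \<longrightarrow> \<Phi> v = 0)"

lemma alt_ml_add:
  assumes "alt_ml \<Phi>" shows "\<Phi> (v(j := x + y)) = \<Phi> (v(j := x)) + \<Phi> (v(j := y))"
  using assms unfolding alt_ml_def by (metis linear_add)

lemma alt_ml_lin:
  assumes "alt_ml \<Phi>" shows "linear (\<lambda>w. \<Phi> (v(j := w)))"
  using assms unfolding alt_ml_def by blast

lemma alt_ml_swap:
  assumes "alt_ml \<Phi>" "a \<noteq> b"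
  shows "\<Phi> (v \<circ> Transposition.transpose a b) = - \<Phi> v"
proof -
  have z: "\<Phi> (v(a := x, b := x)) = 0" for x
    using assms unfolding alt_ml_def by (metis fun_upd_same fun_upd_other)
  have 1: "v \<circ> Transposition.transpose a b = v(a := v b, b := v a)"
    using assms by (auto simp: Transposition.transpose_def fun_eq_iff)
  have 2: "v = v(a := v a, b := v b)" by simp
  have "0 = \<Phi> (v(a := v a + v b, b := v a + v b))" using z by simp
  also have "\<dots> = \<Phi> (v(a := v a, b := v a)) + \<Phi> (v(a := v a, b := v b))
      + \<Phi> (v(a := v b, b := v a)) + \<Phi> (v(a := v b, b := v b))"
  proof -
    have c: "v(a := p, b := q) = v(b := q, a := p)" for p q using assms by (simp add: fun_upd_twist)
    have s1: "\<Phi> (v(a := p, b := x + y)) = \<Phi> (v(a := p, b := x)) + \<Phi> (v(a := p, b := y))" for p x y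
      using alt_ml_add[OF assms(1), of "v(a := p)"] by simp
    have s2: "\<Phi> (v(a := x + y, b := q)) = \<Phi> (v(a := x, b := q)) + \<Phi> (v(a := y, b := q))" for q x y
      using alt_ml_add[OF assms(1), of "v(b := q)"] by (simp only: c)
    show ?thesis by (simp only: s1 s2)
  qed
  also have "\<dots> = \<Phi> v + \<Phi> (v \<circ> Transposition.transpose a b)"
  proof -
    have "\<Phi> (v(a := v a, b := v a)) = 0" "\<Phi> (v(a := v b, b := v b)) = 0" by (rule z)+
    moreover have "\<Phi> (v(a := v a, b := v b)) = \<Phi> v" using 2 by metis
    moreover have "\<Phi> (v(a := v b, b := v a)) = \<Phi> (v \<circ> Transposition.transpose a b)" using 1 by metis
    ultimately show ?thesis by linarith
  qed
  finally show ?thesis by simp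
qed

lemma alt_ml_perm:
  assumes "alt_ml \<Phi>" "p permutes (UNIV :: 'd::finite set)"
  shows "\<forall>v. \<Phi> ((v :: 'd \<Rightarrow> real^'n::finite) \<circ> p) = of_int (sign p) * \<Phi> v"
  using assms(2) finite_class.finite_UNIV
proof (induction p rule: permutes_induct)
  case id
  then show ?case by simp
next
  case (swap a b p)
  show ?case
  proof
    fix v :: "'d \<Rightarrow> real^'n"
    have pp: "permutation p" using swap.hyps(4) by (rule permutes_imp_permutation[OF finite_class.finite_UNIV])
    have pt: "permutation (Transposition.transpose a b)" by (rule permutation_swap_id)
    have "\<Phi> (v \<circ> (Transposition.transpose a b \<circ> p)) = \<Phi> ((v \<circ> Transposition.transpose a b) \<circ> p)"
      by (simp only: o_assoc)
    also have "\<dots> = of_int (sign p) * \<Phi> (v \<circ> Transposition.transpose a b)" using swap.IH by (rule spec)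
    also have "\<dots> = - of_int (sign p) * \<Phi> v" using alt_ml_swap[OF assms(1) swap.hyps(3)] by simp
    also have "\<dots> = of_int (sign (Transposition.transpose a b \<circ> p)) * \<Phi> v"
      using swap.hyps(3) by (simp add: sign_compose[OF pt pp] sign_swap_id)
    finally show "\<Phi> (v \<circ> (Transposition.transpose a b \<circ> p)) = of_int (sign (Transposition.transpose a b \<circ> p)) * \<Phi> v" .
  qed
qed

lemma alt_ml_expand_gen:
  assumes "alt_ml \<Phi>" "finite J"
  shows "\<forall>v. \<Phi> (v :: 'd::finite \<Rightarrow> real^'n::finite) = (\<Sum>f\<in>PiE J (\<lambda>_. UNIV).
      (\<Prod>j\<in>J. v j $ f j) * \<Phi> (\<lambda>j. if j \<in> J then axis (f j) 1 else v j))"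
  using assms(2)
proof (induction J rule: finite_induct)
  case empty
  then show ?case by simp
next
  case (insert z J)
  show ?case
  proof
    fix v :: "'d \<Rightarrow> real^'n"
    let ?u = "\<lambda>f. (\<lambda>j. if j \<in> J then axis (f j) 1 else v j)"
    let ?w = "\<lambda>f. (\<lambda>j. if j \<in> insert z J then axis (f j) 1 else v j)"
    have lin: "linear (\<lambda>w. \<Phi> ((?u f)(z := w)))" for f by (rule alt_ml_lin[OF assms(1)])
    have uz: "?u f z = v z" for f using insert.hyps by simp
    have step: "\<Phi> (?u f) = (\<Sum>k\<in>UNIV. v z $ k * \<Phi> ((?u f)(z := axis k 1)))" for f
    proof -
      have ve: "(\<Sum>k\<in>UNIV. v z $ k *\<^sub>R axis k 1) = v z"
        using basis_expansion[of "v z"] by (simp add: scalar_mult_eq_scaleR)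
      have "(?u f)(z := (\<Sum>k\<in>UNIV. v z $ k *\<^sub>R axis k 1)) = ?u f"
        unfolding ve using insert.hyps(2) by (auto simp: fun_eq_iff)
      then have "\<Phi> (?u f) = \<Phi> ((?u f)(z := (\<Sum>k\<in>UNIV. v z $ k *\<^sub>R axis k 1)))" by (simp only:)
      also have "\<dots> = (\<Sum>k\<in>UNIV. v z $ k * \<Phi> ((?u f)(z := axis k 1)))"
        by (simp only: linear_sum[OF lin[of f]] linear_cmul[OF lin[of f]] real_scaleR_def)
      finally show ?thesis .
    qed
    have upd: "(?u f)(z := axis k 1) = ?w (f(z := k))" if "f \<in> PiE J (\<lambda>_. UNIV)" for f k
      using insert.hyps(2) by (auto simp: fun_eq_iff)
    have pr: "(\<Prod>j\<in>insert z J. v j $ (f(z := k)) j) = v z $ k * (\<Prod>j\<in>J. v j $ f j)" for f k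
    proof -
      have "(\<Prod>j\<in>J. v j $ (f(z := k)) j) = (\<Prod>j\<in>J. v j $ f j)"
        using insert.hyps by (intro prod.cong) auto
      then show ?thesis using insert.hyps by simp
    qed
    have "\<Phi> v = (\<Sum>f\<in>PiE J (\<lambda>_. UNIV). (\<Prod>j\<in>J. v j $ f j) * \<Phi> (?u f))"
      using insert.IH by (rule spec)
    also have "\<dots> = (\<Sum>f\<in>PiE J (\<lambda>_. UNIV). \<Sum>k\<in>UNIV. (\<Prod>j\<in>insert z J. v j $ (f(z := k)) j) * \<Phi> (?w (f(z := k))))"
    proof (intro sum.cong refl)
      fix f :: "'d \<Rightarrow> 'n" assume f: "f \<in> PiE J (\<lambda>_. UNIV)"
      have "(\<Prod>j\<in>J. v j $ f j) * \<Phi> (?u f) = (\<Sum>k\<in>UNIV. (\<Prod>j\<in>J. v j $ f j) * (v z $ k * \<Phi> ((?u f)(z := axis k 1))))"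
        unfolding step[of f] by (rule sum_distrib_left)
      also have "\<dots> = (\<Sum>k\<in>UNIV. (\<Prod>j\<in>insert z J. v j $ (f(z := k)) j) * \<Phi> (?w (f(z := k))))"
        by (intro sum.cong refl) (simp only: upd[OF f] pr mult.assoc mult.left_commute)
      finally show "(\<Prod>j\<in>J. v j $ f j) * \<Phi> (?u f) = (\<Sum>k\<in>UNIV. (\<Prod>j\<in>insert z J. v j $ (f(z := k)) j) * \<Phi> (?w (f(z := k))))" .
    qed
    also have "\<dots> = (\<Sum>(k, f)\<in>UNIV \<times> PiE J (\<lambda>_. UNIV). (\<Prod>j\<in>insert z J. v j $ (f(z := k)) j) * \<Phi> (?w (f(z := k))))"
      by (subst sum.swap) (simp add: sum.cartesian_product)
    also have "\<dots> = (\<Sum>g\<in>PiE (insert z J) (\<lambda>_. UNIV). (\<Prod>j\<in>insert z J. v j $ g j) * \<Phi> (?w g))"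
      unfolding PiE_insert_eq
      by (subst sum.reindex[OF inj_combinator[OF insert.hyps(2)]]) (simp add: case_prod_unfold)
    finally show "\<Phi> v = (\<Sum>g\<in>PiE (insert z J) (\<lambda>_. UNIV). (\<Prod>j\<in>insert z J. v j $ g j) * \<Phi> (?w g))" .
  qed
qed

lemma alt_ml_expand:
  assumes "alt_ml \<Phi>"
  shows "\<Phi> (v :: 'd::finite \<Rightarrow> real^'n::finite) = (\<Sum>f\<in>UNIV. (\<Prod>j\<in>UNIV. v j $ f j) * \<Phi> (\<lambda>j. axis (f j) 1))"
proof -
  have "\<forall>v. \<Phi> (v :: 'd::finite \<Rightarrow> real^'n::finite) = (\<Sum>f\<in>PiE UNIV (\<lambda>_. UNIV).
      (\<Prod>j\<in>UNIV. v j $ f j) * \<Phi> (\<lambda>j. if j \<in> UNIV then axis (f j) 1 else v j))"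
    by (rule alt_ml_expand_gen[OF assms finite_class.finite_UNIV])
  then have "\<Phi> v = (\<Sum>f\<in>PiE UNIV (\<lambda>_. UNIV).
      (\<Prod>j\<in>UNIV. v j $ f j) * \<Phi> (\<lambda>j. if j \<in> UNIV then axis (f j) 1 else v j))" by (rule spec)
  also have "\<dots> = (\<Sum>f\<in>UNIV. (\<Prod>j\<in>UNIV. v j $ f j) * \<Phi> (\<lambda>j. axis (f j) 1))"
    by (simp only: PiE_UNIV UNIV_I if_True)
  finally show ?thesis .
qed

lemma alt_ml_det:
  assumes "alt_ml \<Phi>"
  shows "fact CARD('d) * \<Phi> (v :: 'd::finite \<Rightarrow> real^'n::finite)
    = (\<Sum>g\<in>UNIV. \<Phi> (\<lambda>j. axis (g j) 1) * det (\<chi> j k. v j $ g k :: real^'d^'d))"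
proof -
  let ?P = "{p. p permutes (UNIV :: 'd set)}"
  let ?E = "\<lambda>f::'d \<Rightarrow> 'n. (\<lambda>j. axis (f j) 1 :: real^'n)"
  have inner: "(\<Sum>g\<in>UNIV. \<Phi> (?E g) * (of_int (sign p) * (\<Prod>j\<in>UNIV. v j $ g (p j))))
      = \<Phi> v" if p: "p permutes (UNIV :: 'd set)" for p
  proof -
    have pinv: "inv p (p x) = x" "p (inv p x) = x" for x using permutes_inverses[OF p] by auto
    have "(\<Sum>g\<in>UNIV. \<Phi> (?E g) * (of_int (sign p) * (\<Prod>j\<in>UNIV. v j $ g (p j))))
        = (\<Sum>f\<in>UNIV. \<Phi> (?E (f \<circ> inv p)) * (of_int (sign p) * (\<Prod>j\<in>UNIV. v j $ (f \<circ> inv p) (p j))))"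
      by (rule sum.reindex_bij_witness[where i="\<lambda>b. b \<circ> inv p" and j="\<lambda>a. a \<circ> p"])
         (auto simp: fun_eq_iff pinv)
    also have "\<dots> = (\<Sum>f\<in>UNIV. (\<Prod>j\<in>UNIV. v j $ f j) * \<Phi> (?E f))"
    proof (intro sum.cong refl)
      fix f :: "'d \<Rightarrow> 'n"
      have pp: "permutation p" using p by (rule permutes_imp_permutation[OF finite_class.finite_UNIV])
      have "\<Phi> (?E (f \<circ> inv p)) = \<Phi> (?E f \<circ> inv p)" by (simp add: o_def)
      also have "\<dots> = of_int (sign (inv p)) * \<Phi> (?E f)"
        using alt_ml_perm[OF assms permutes_inv[OF p]] by blast
      also have "\<dots> = of_int (sign p) * \<Phi> (?E f)" by (simp add: sign_inverse[OF pp])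
      finally have 1: "\<Phi> (?E (f \<circ> inv p)) = of_int (sign p) * \<Phi> (?E f)" .
      have 2: "(\<Prod>j\<in>UNIV. v j $ (f \<circ> inv p) (p j)) = (\<Prod>j\<in>UNIV. v j $ f j)" by (simp add: pinv)
      have 3: "of_int (sign p) * of_int (sign p) = (1::real)"
        by (metis of_int_1 of_int_mult sign_idempotent)
      show "\<Phi> (?E (f \<circ> inv p)) * (of_int (sign p) * (\<Prod>j\<in>UNIV. v j $ (f \<circ> inv p) (p j)))
          = (\<Prod>j\<in>UNIV. v j $ f j) * \<Phi> (?E f)"
        unfolding 1 2 using 3 by (simp add: algebra_simps)
    qed
    also have "\<dots> = \<Phi> v" using alt_ml_expand[OF assms, of v] by simp
    finally show ?thesis .
  qed
  have "(\<Sum>g\<in>UNIV. \<Phi> (?E g) * det (\<chi> j k. v j $ g k :: real^'d^'d))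
      = (\<Sum>g\<in>UNIV. \<Sum>p\<in>?P. \<Phi> (?E g) * (of_int (sign p) * (\<Prod>j\<in>UNIV. v j $ g (p j))))"
    by (simp add: det_def sum_distrib_left)
  also have "\<dots> = (\<Sum>p\<in>?P. \<Sum>g\<in>UNIV. \<Phi> (?E g) * (of_int (sign p) * (\<Prod>j\<in>UNIV. v j $ g (p j))))"
    by (rule sum.swap)
  also have "\<dots> = (\<Sum>p\<in>?P. \<Phi> v)" by (intro sum.cong refl) (simp add: inner)
  also have "\<dots> = fact CARD('d) * \<Phi> v"
    by (simp add: card_permutations[OF refl finite_class.finite_UNIV])
  finally show ?thesis by simp
qed

lemma det_form:
  fixes q :: "'d::finite \<Rightarrow> 'n::finite"
  shows "continuous_form_on S (\<lambda>x (v::'d \<Rightarrow> real^'n). det (\<chi> j k. v j $ q k :: real^'d^'d))"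
proof -
  have lin: "linear (\<lambda>w. det (\<chi> j k. (v(j0 := w)) j $ q k :: real^'d^'d))" for v :: "'d \<Rightarrow> real^'n" and j0
  proof -
    let ?R = "\<lambda>w::real^'n. (\<chi> k. w $ q k) :: real^'d"
    have eq: "(\<chi> j k. (v(j0 := w)) j $ q k :: real^'d^'d) = (\<chi> j. if j = j0 then ?R w else ?R (v j))" for w
      by (simp add: vec_eq_iff)
    show ?thesis
    proof (rule linearI)
      fix x y :: "real^'n"
      have r: "?R (x + y) = ?R x + ?R y" by (simp add: vec_eq_iff)
      show "det (\<chi> j k. (v(j0 := x + y)) j $ q k :: real^'d^'d) =
          det (\<chi> j k. (v(j0 := x)) j $ q k :: real^'d^'d) + det (\<chi> j k. (v(j0 := y)) j $ q k :: real^'d^'d)"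
        unfolding eq r by (rule det_row_add)
    next
      fix c :: real and x :: "real^'n"
      have r: "?R (c *\<^sub>R x) = c *s ?R x" by (simp add: vec_eq_iff)
      show "det (\<chi> j k. (v(j0 := c *\<^sub>R x)) j $ q k :: real^'d^'d) =
          c *\<^sub>R det (\<chi> j k. (v(j0 := x)) j $ q k :: real^'d^'d)"
        unfolding eq r by (simp only: det_row_mul real_scaleR_def)
    qed
  qed
  have alt: "det (\<chi> j k. v j $ q k :: real^'d^'d) = 0" if "i \<noteq> j" "v i = v j" for v :: "'d \<Rightarrow> real^'n" and i j
    by (rule det_identical_rows[OF that(1)]) (simp add: row_def that(2))
  show ?thesis unfolding continuous_form_on_def using lin alt by auto
qed

lemma abs_int_Union:
  fixes f :: "'a::euclidean_space \<Rightarrow> real"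
  assumes "finite \<K>" "\<And>K. K \<in> \<K> \<Longrightarrow> f absolutely_integrable_on K"
  shows "f absolutely_integrable_on (\<Union>\<K>)"
  using assms
proof (induction \<K> rule: finite_induct)
  case empty
  then show ?case by (simp add: set_integrable_def)
next
  case (insert K \<K>)
  then show ?case by (simp add: absolutely_integrable_Un)
qed

lemma local_piece:
  fixes \<sigma> :: "real^'d::finite \<Rightarrow> 'a" and \<psi> \<phi> :: "'a \<Rightarrow> real^'n::finite"
  assumes S_open: "open S" and SsubT: "S \<subseteq> T" and SsubTi: "S \<subseteq> Ti"
    and sT: "\<sigma> ` T \<subseteq> U" and sTi: "\<sigma> ` Ti \<subseteq> Ui"
    and cpt: "compact (T \<inter> Ti)"
    and cont\<rho>: "continuous_on T (\<psi> \<circ> \<sigma>)" and cont\<tau>: "continuous_on Ti (\<phi> \<circ> \<sigma>)"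
    and inj\<phi>: "inj_on \<phi> Ui"
    and trans: "C1_ext (\<phi> ` (Ui \<inter> U)) (\<psi> \<circ> inv_into Ui \<phi>)"
    and C1\<tau>: "\<And>x. x \<in> S \<Longrightarrow> \<exists>W g. x \<in> W \<and> C1_on_open W g \<and> (\<forall>y\<in>W \<inter> S. g y = (\<phi> \<circ> \<sigma>) y)"
    and fv: "finite_volume Ti (\<phi> \<circ> \<sigma>)"
    and form: "continuous_form_on ((\<psi> \<circ> \<sigma>) ` T) \<omega>"
  shows "pullback_density (\<psi> \<circ> \<sigma>) \<omega> absolutely_integrable_on S"
proof -
  obtain W h where W: "\<phi> ` (Ui \<inter> U) \<subseteq> W" "C1_on_open W h"
      "\<forall>y\<in>\<phi> ` (Ui \<inter> U). h y = (\<psi> \<circ> inv_into Ui \<phi>) y"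
    using trans unfolding C1_ext_def by blast
  obtain h' where h': "\<forall>y\<in>W. (h has_derivative blinfun_apply (h' y)) (at y)" "continuous_on W h'"
    using W(2) unfolding C1_on_open_def by blast
  define \<tau> where "\<tau> = \<phi> \<circ> \<sigma>"
  define \<rho> where "\<rho> = \<psi> \<circ> \<sigma>"
  have \<tau>W: "\<tau> ` (T \<inter> Ti) \<subseteq> W"
    using sT sTi W(1) unfolding \<tau>_def by auto
  have \<rho>h: "\<rho> a = h (\<tau> a)" if "a \<in> T \<inter> Ti" for a
  proof -
    have "\<sigma> a \<in> Ui \<inter> U" using that sT sTi by auto
    then show ?thesis using W(3) inv_into_f_f[OF inj\<phi>] unfolding \<rho>_def \<tau>_def by auto
  qed
  have \<rho>hS: "\<forall>x\<in>S. h (\<tau> x) = \<rho> x" using \<rho>h SsubT SsubTi by (metis IntI subsetD)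
  have d\<tau>: "(\<tau> has_derivative frechet_derivative \<tau> (at a)) (at a)" if a: "a \<in> S" for a
  proof -
    obtain W2 g2 where g2: "a \<in> W2" "C1_on_open W2 g2" "\<forall>y\<in>W2 \<inter> S. g2 y = \<tau> y"
      using C1\<tau>[OF a] unfolding \<tau>_def by blast
    obtain g2' where g2': "\<forall>y\<in>W2. (g2 has_derivative blinfun_apply (g2' y)) (at y)" "open W2"
      using g2(2) unfolding C1_on_open_def by blast
    have "(\<tau> has_derivative blinfun_apply (g2' a)) (at a)"
      by (rule has_derivative_transform_within_open[of g2 _ _ _ "W2 \<inter> S"])
         (use g2 g2' a S_open in auto)
    then show ?thesis using frechet_derivative_at by metis
  qed
  have d\<rho>: "frechet_derivative \<rho> (at a) = blinfun_apply (h' (\<tau> a)) \<circ> frechet_derivative \<tau> (at a)"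
    if a: "a \<in> S" for a
  proof -
    have "\<tau> a \<in> W" using \<tau>W a SsubT SsubTi by auto
    then have "((h \<circ> \<tau>) has_derivative (blinfun_apply (h' (\<tau> a)) \<circ> frechet_derivative \<tau> (at a))) (at a)"
      using diff_chain_at[OF d\<tau>[OF a]] h'(1) by blast
    then have "(\<rho> has_derivative (blinfun_apply (h' (\<tau> a)) \<circ> frechet_derivative \<tau> (at a))) (at a)"
      by (rule has_derivative_transform_within_open[of _ _ _ _ S])
         (use a S_open \<rho>hS in auto)
    then show ?thesis using frechet_derivative_at by metis
  qed
  have alt\<omega>: "alt_ml (\<omega> x)" if "x \<in> \<rho> ` T" for x
    using form that unfolding continuous_form_on_def alt_ml_def \<rho>_def by blast
  define E where "E q = (\<lambda>j. axis (q j) 1 :: real^'n)" for q :: "'d \<Rightarrow> 'n"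
  define C where "C q a = (\<Sum>f\<in>UNIV. (\<Prod>j\<in>UNIV. blinfun_apply (h' (\<tau> a)) (E q j) $ f j) * \<omega> (\<rho> a) (E f))"
    for q a
  define Dq where "Dq q = pullback_density \<tau> (\<lambda>x (v::'d \<Rightarrow> real^'n). det (\<chi> j k. v j $ q k :: real^'d^'d))"
    for q :: "'d \<Rightarrow> 'n"
  have eq: "pullback_density \<rho> \<omega> a = (\<Sum>q\<in>UNIV. C q a / fact CARD('d) * Dq q a)" if a: "a \<in> S" for a
  proof -
    let ?L = "blinfun_apply (h' (\<tau> a))"
    define \<Phi> where "\<Phi> v = \<omega> (\<rho> a) (\<lambda>j. ?L (v j))" for v :: "'d \<Rightarrow> real^'n"
    have a\<omega>: "alt_ml (\<omega> (\<rho> a))" using alt\<omega> a SsubT by auto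
    have linL: "linear ?L" by (simp add: blinfun.bounded_linear_right bounded_linear.linear)
    have "alt_ml \<Phi>"
      unfolding alt_ml_def
    proof safe
      fix v :: "'d \<Rightarrow> real^'n" and j
      have "(\<lambda>w. \<Phi> (v(j := w))) = (\<lambda>w. \<omega> (\<rho> a) ((\<lambda>i. ?L (v i))(j := w))) \<circ> ?L"
        by (auto simp: \<Phi>_def fun_eq_iff intro!: arg_cong[where f="\<omega> (\<rho> a)"])
      moreover have "linear (\<lambda>w. \<omega> (\<rho> a) ((\<lambda>i. ?L (v i))(j := w)))"
        using a\<omega> unfolding alt_ml_def by blast
      ultimately show "linear (\<lambda>w. \<Phi> (v(j := w)))" using linL linear_compose by metis
    next
      fix v :: "'d \<Rightarrow> real^'n" and i j
      assume ij: "i \<noteq> j" "v i = v j"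
      have z: "\<And>u. u i = u j \<Longrightarrow> \<omega> (\<rho> a) u = 0" using a\<omega> ij(1) unfolding alt_ml_def by blast
      show "\<Phi> v = 0" unfolding \<Phi>_def by (rule z) (simp add: ij(2))
    qed
    have CE: "\<Phi> (E q) = C q a" for q
      unfolding \<Phi>_def C_def using alt_ml_expand[OF a\<omega>, of "\<lambda>j. ?L (E q j)"] by (simp add: E_def)
    have "pullback_density \<rho> \<omega> a = \<Phi> (\<lambda>j. frechet_derivative \<tau> (at a) (axis j 1))"
      unfolding pullback_density_def \<Phi>_def d\<rho>[OF a] by simp
    also have "\<dots> = (\<Sum>q\<in>UNIV. \<Phi> (E q) * det (\<chi> j k. frechet_derivative \<tau> (at a) (axis j 1) $ q k :: real^'d^'d))
         / fact CARD('d)"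
      using alt_ml_det[OF \<open>alt_ml \<Phi>\<close>, of "\<lambda>j. frechet_derivative \<tau> (at a) (axis j 1)"]
      unfolding E_def by (simp add: field_simps)
    also have "\<dots> = (\<Sum>q\<in>UNIV. C q a / fact CARD('d) * Dq q a)"
      unfolding CE Dq_def pullback_density_def sum_divide_distrib by (simp add: field_simps)
    finally show ?thesis .
  qed
  have Sleb: "S \<in> sets lebesgue" using S_open by simp
  have int: "(\<lambda>a. C q a / fact CARD('d) * Dq q a) absolutely_integrable_on S" for q
  proof -
    have "Dq q absolutely_integrable_on interior Ti"
      using fv det_form[where q=q and S="\<tau> ` Ti"] unfolding finite_volume_def Dq_def \<tau>_def by blast
    moreover have "S \<subseteq> interior Ti" using S_open SsubTi interior_maximal by blast
    ultimately have Dint: "Dq q absolutely_integrable_on S"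
      using set_integrable_subset[of lebesgue "interior Ti" "Dq q" S] Sleb by blast
    have c1: "continuous_on (T \<inter> Ti) (\<lambda>a. h' (\<tau> a))"
      by (rule continuous_on_compose2[OF h'(2) _ \<tau>W])
         (use cont\<tau> in \<open>auto simp: \<tau>_def intro: continuous_on_subset\<close>)
    have c2: "continuous_on (T \<inter> Ti) (\<lambda>a. \<omega> (\<rho> a) v)" for v
      by (rule continuous_on_compose2[of "\<rho> ` T" "\<lambda>x. \<omega> x v"])
         (use form cont\<rho> in \<open>auto simp: continuous_form_on_def \<rho>_def intro: continuous_on_subset\<close>)
    have cC: "continuous_on (T \<inter> Ti) (C q)"
      unfolding C_def
      by (intro continuous_intros c2 blinfun.continuous_on[OF c1] continuous_on_component)
    have "compact (C q ` (T \<inter> Ti))" using compact_continuous_image[OF cC cpt] .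
    then have "bounded (C q ` (T \<inter> Ti))" by (rule compact_imp_bounded)
    then have bS: "bounded (C q ` S)" using SsubT SsubTi by (meson bounded_subset image_mono Int_greatest)
    have im: "(\<lambda>a. C q a / fact CARD('d)) ` S = (\<lambda>x. inverse (fact CARD('d)) *\<^sub>R x) ` (C q ` S)"
      by (auto simp: image_image divide_inverse mult.commute)
    have bC: "bounded ((\<lambda>a. C q a / fact CARD('d)) ` S)"
      unfolding im by (rule bounded_scaling[OF bS])
    have mC: "(\<lambda>a. C q a / fact CARD('d)) \<in> borel_measurable (lebesgue_on S)"
      by (rule continuous_imp_measurable_on_sets_lebesgue[OF _ Sleb])
         (use cC SsubT SsubTi in \<open>auto intro!: continuous_intros intro: continuous_on_subset\<close>)
    show ?thesis
      using absolutely_integrable_bounded_measurable_product[OF bilinear_times mC Sleb bC Dint] by simp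
  qed
  have "(\<lambda>a. \<Sum>q\<in>UNIV. C q a / fact CARD('d) * Dq q a) absolutely_integrable_on S"
    by (rule absolutely_integrable_sum) (use int in auto)
  then show ?thesis
    by (rule absolutely_integrable_spike[of _ _ "{}"]) (use eq in \<open>auto simp: \<rho>_def\<close>)
qed

lemma chart_inj:
  assumes "C1_manifold_with_corners X A" "(U, \<phi>) \<in> A"
  shows "inj_on \<phi> U"
proof -
  have o: "openin X U" and hm: "homeomorphic_map (subtopology X U) (top_of_set (\<phi> ` U)) \<phi>"
    using assms unfolding C1_manifold_with_corners_def by fastforce+
  have "topspace (subtopology X U) = U" using openin_subset[OF o] by auto
  then show ?thesis using homeomorphic_imp_injective_map[OF hm] by simp
qed

lemma chart_cont:
  assumes "C1_manifold_with_corners X A" "(U, \<phi>) \<in> A"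
    and \<sigma>: "continuous_map (top_of_set std_simplex) X \<sigma>"
    and "S \<subseteq> std_simplex" "\<sigma> ` S \<subseteq> U"
  shows "continuous_on S (\<phi> \<circ> \<sigma>)"
proof -
  have hm: "homeomorphic_map (subtopology X U) (top_of_set (\<phi> ` U)) \<phi>"
    using assms(1,2) unfolding C1_manifold_with_corners_def by fastforce
  have c\<phi>: "continuous_map (subtopology X U) (top_of_set (\<phi> ` U)) \<phi>"
    using homeomorphic_imp_continuous_map[OF hm] .
  have "continuous_map (subtopology (top_of_set std_simplex) S) X \<sigma>"
    using continuous_map_from_subtopology[OF \<sigma>] .
  moreover have "subtopology (top_of_set std_simplex) S = top_of_set S"
    using assms(4) by (simp add: subtopology_subtopology Int_absorb1)
  ultimately have "continuous_map (top_of_set S) X \<sigma>" by simp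
  then have "continuous_map (top_of_set S) (subtopology X U) \<sigma>"
    using assms(5) by (intro continuous_map_into_subtopology) auto
  then have "continuous_map (top_of_set S) (top_of_set (\<phi> ` U)) (\<phi> \<circ> \<sigma>)"
    using continuous_map_compose c\<phi> by blast
  then have "continuous_map (top_of_set S) euclidean (\<phi> \<circ> \<sigma>)"
    using continuous_map_into_fulltopology by blast
  then show ?thesis by simp
qed

lemma convex_std_simplex: "convex (std_simplex :: (real^'d::finite) set)"
  unfolding convex_def std_simplex_def
proof (safe)
  fix x y :: "real^'d" and u v :: real and i
  assume "\<forall>i. 0 \<le> x $ i" "\<forall>i. 0 \<le> y $ i" "0 \<le> u" "0 \<le> v"
  then show "0 \<le> (u *\<^sub>R x + v *\<^sub>R y) $ i" by simp
next
  fix x y :: "real^'d" and u v :: real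
  assume sx: "(\<Sum>i\<in>UNIV. x $ i) \<le> 1" and sy: "(\<Sum>i\<in>UNIV. y $ i) \<le> 1" and uv: "0 \<le> u" "0 \<le> v" "u + v = 1"
  have "(\<Sum>i\<in>UNIV. (u *\<^sub>R x + v *\<^sub>R y) $ i) = u * (\<Sum>i\<in>UNIV. x $ i) + v * (\<Sum>i\<in>UNIV. y $ i)"
    by (simp add: sum.distrib sum_distrib_left)
  also have "\<dots> \<le> u * 1 + v * 1"
    using sx sy uv by (intro add_mono mult_left_mono) auto
  finally show "(\<Sum>i\<in>UNIV. (u *\<^sub>R x + v *\<^sub>R y) $ i) \<le> 1" using uv by simp
qed

theorem lemma4p6:
  fixes X :: "'a topology"
    and A :: "('a set \<times> ('a \<Rightarrow> real^'n::finite)) set"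
    and \<sigma> :: "real^'d::finite \<Rightarrow> 'a"
  assumes "C1_manifold_with_corners X A"
    and "C1_on_open_faces X A \<sigma>"
    and "\<exists>\<T> c. subdivision \<T> \<and>
           (\<forall>T\<in>\<T>. c T \<in> A \<and> \<sigma> ` T \<subseteq> fst (c T) \<and> finite_volume T (snd (c T) \<circ> \<sigma>))"
  shows "\<forall>\<T>'. subdivision \<T>' \<longrightarrow>
           (\<forall>T\<in>\<T>'. \<forall>(U, \<phi>)\<in>A. \<sigma> ` T \<subseteq> U \<longrightarrow> finite_volume T (\<phi> \<circ> \<sigma>))"
proof -
  obtain \<T> c where sub: "subdivision \<T>"
    and cT: "\<forall>Ti\<in>\<T>. c Ti \<in> A \<and> \<sigma> ` Ti \<subseteq> fst (c Ti) \<and> finite_volume Ti (snd (c Ti) \<circ> \<sigma>)"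
    using assms(3) by blast
  have \<sigma>c: "continuous_map (top_of_set std_simplex) X \<sigma>"
    using assms(2) unfolding C1_on_open_faces_def by blast
  have fin: "finite \<T>" and Ustd: "\<Union>\<T> = std_simplex" and sx: "\<forall>Ti\<in>\<T>. int CARD('d) simplex Ti"
    using sub unfolding subdivision_def by auto
  have main: "finite_volume T (\<psi> \<circ> \<sigma>)"
    if sub': "subdivision \<T>'" and T: "T \<in> \<T>'" and UA: "(U, \<psi>) \<in> A" and sT: "\<sigma> ` T \<subseteq> U"
    for \<T>' T U \<psi>
  proof -
    have Tstd: "T \<subseteq> std_simplex" using sub' T unfolding subdivision_def by blast
    have Tsx: "int CARD('d) simplex T" using sub' T unfolding subdivision_def by blast
    show ?thesis
      unfolding finite_volume_def
    proof (intro allI impI)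
      fix \<omega> :: "real^'n \<Rightarrow> ('d \<Rightarrow> real^'n) \<Rightarrow> real" assume form: "continuous_form_on ((\<psi> \<circ> \<sigma>) ` T) \<omega>"
      have piece: "pullback_density (\<psi> \<circ> \<sigma>) \<omega> absolutely_integrable_on (interior T \<inter> interior Ti)"
        if Ti: "Ti \<in> \<T>" for Ti
      proof -
        obtain Ui \<phi> where cTi: "c Ti = (Ui, \<phi>)" by (cases "c Ti")
        have UiA: "(Ui, \<phi>) \<in> A" and sTi: "\<sigma> ` Ti \<subseteq> Ui" and fv: "finite_volume Ti (\<phi> \<circ> \<sigma>)"
          using cT Ti cTi by (metis fst_conv snd_conv)+
        have Tistd: "Ti \<subseteq> std_simplex" using Ustd Ti by blast
        have trans: "C1_ext (\<phi> ` (Ui \<inter> U)) (\<psi> \<circ> inv_into Ui \<phi>)"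
          using assms(1) UiA UA unfolding C1_manifold_with_corners_def by fastforce
        have Fo: "rel_interior std_simplex \<in> open_faces std_simplex"
          unfolding open_faces_def using face_of_refl[OF convex_std_simplex] by blast
        show ?thesis
        proof (rule local_piece[where U=U and Ui=Ui])
          show "open (interior T \<inter> interior Ti)" by auto
          show "interior T \<inter> interior Ti \<subseteq> T" "interior T \<inter> interior Ti \<subseteq> Ti"
            using interior_subset by blast+
          show "\<sigma> ` T \<subseteq> U" by (rule sT)
          show "\<sigma> ` Ti \<subseteq> Ui" by (rule sTi)
          show "compact (T \<inter> Ti)" using compact_simplex Tsx sx Ti by (meson compact_Int)
          show "continuous_on T (\<psi> \<circ> \<sigma>)" by (rule chart_cont[OF assms(1) UA \<sigma>c Tstd sT])
          show "continuous_on Ti (\<phi> \<circ> \<sigma>)" by (rule chart_cont[OF assms(1) UiA \<sigma>c Tistd sTi])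
          show "inj_on \<phi> Ui" by (rule chart_inj[OF assms(1) UiA])
          show "C1_ext (\<phi> ` (Ui \<inter> U)) (\<psi> \<circ> inv_into Ui \<phi>)" by (rule trans)
          show "finite_volume Ti (\<phi> \<circ> \<sigma>)" by (rule fv)
          show "continuous_form_on ((\<psi> \<circ> \<sigma>) ` T) \<omega>" by (rule form)
        next
          fix x assume x: "x \<in> interior T \<inter> interior Ti"
          have xF: "x \<in> rel_interior std_simplex"
            using x interior_mono[OF Tistd] interior_subset_rel_interior by blast
          have "\<sigma> x \<in> Ui" using x sTi interior_subset by blast
          then have "C1_near {y \<in> rel_interior std_simplex. \<sigma> y \<in> Ui} (\<phi> \<circ> \<sigma>) x"
            using assms(2) Fo xF UiA unfolding C1_on_open_faces_def by fastforce
          then obtain W g where Wg: "x \<in> W" "C1_on_open W g"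
              "\<forall>y\<in>W \<inter> {y \<in> rel_interior std_simplex. \<sigma> y \<in> Ui}. g y = (\<phi> \<circ> \<sigma>) y"
            unfolding C1_near_def by blast
          have "W \<inter> (interior T \<inter> interior Ti) \<subseteq> W \<inter> {y \<in> rel_interior std_simplex. \<sigma> y \<in> Ui}"
            using interior_mono[OF Tistd] interior_subset_rel_interior sTi interior_subset by blast
          then show "\<exists>W g. x \<in> W \<and> C1_on_open W g \<and> (\<forall>y\<in>W \<inter> (interior T \<inter> interior Ti). g y = (\<phi> \<circ> \<sigma>) y)"
            using Wg by blast
        qed
      qed
      let ?V = "\<Union>((\<lambda>Ti. interior T \<inter> interior Ti) ` \<T>)"
      have Vint: "pullback_density (\<psi> \<circ> \<sigma>) \<omega> absolutely_integrable_on ?V"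
        by (rule abs_int_Union) (use fin piece in auto)
      have neg: "negligible (\<Union>(frontier ` \<T>))"
      proof (rule negligible_Union)
        show "finite (frontier ` \<T>)" using fin by simp
      next
        fix K assume "K \<in> frontier ` \<T>"
        then obtain Ti where Ti: "Ti \<in> \<T>" "K = frontier Ti" by blast
        have "convex Ti" using sx Ti(1) unfolding simplex by (metis convex_convex_hull)
        then show "negligible K" using Ti(2) negligible_convex_frontier by blast
      qed
      have sub1: "interior T - ?V \<subseteq> \<Union>(frontier ` \<T>)"
      proof
        fix x assume x: "x \<in> interior T - ?V"
        then have "x \<in> std_simplex" using Tstd interior_subset by blast
        then obtain Ti where Ti: "Ti \<in> \<T>" "x \<in> Ti" using Ustd by blast
        have "x \<notin> interior Ti" using x Ti by blast
        moreover have "closed Ti" using compact_simplex sx Ti(1) compact_imp_closed by blast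
        ultimately have "x \<in> frontier Ti" using Ti(2) by (simp add: frontier_def)
        then show "x \<in> \<Union>(frontier ` \<T>)" using Ti(1) by blast
      qed
      have "pullback_density (\<psi> \<circ> \<sigma>) \<omega> absolutely_integrable_on ?V \<longleftrightarrow>
            pullback_density (\<psi> \<circ> \<sigma>) \<omega> absolutely_integrable_on interior T"
      proof (rule absolutely_integrable_spike_set_eq)
        show "negligible {x \<in> ?V - interior T. pullback_density (\<psi> \<circ> \<sigma>) \<omega> x \<noteq> 0}" by (rule negligible_subset[of "{}"]) auto
        show "negligible {x \<in> interior T - ?V. pullback_density (\<psi> \<circ> \<sigma>) \<omega> x \<noteq> 0}"
          by (rule negligible_subset[OF neg]) (use sub1 in blast)
      qed
      then show "pullback_density (\<psi> \<circ> \<sigma>) \<omega> absolutely_integrable_on interior T" using Vint by blast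
    qed
  qed
  show ?thesis using main by blast
qed

end
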